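(* Let $x_1, x_2, \dots$ be a sequence of real observations and let $f_0(\cdot\mid\theta_0)$ and $f_1(\cdot\mid\theta_1)$ be probability densities that are strictly positive at every $x_k$. Put $\ell_k = \log \frac{f_1(x_k\mid\theta_1)}{f_0(x_k\mid\theta_0)}$. Define the CUSUM statistic recursively by $W_0 = 0$ and $W_n = \max(0, W_{n-1}) + \ell_n$ for $n \ge 1$. For $n\ge 0$, define the log generalized likelihood ratio statistic for a temporary change by $$G_n^{\ast} = \max_{0 \le \nu \le N \le n} \ \sum_{k=\nu+1}^{N} \ell_k ,$$ where an empty sum is $0$. Then $G_n^{\ast} = G_n$ for every $n \ge 0$, where $G_0 = 0$ and $G_n = \max(G_{n-1}, W_n)$ for $n \ge 1$.
   Context: The statistic $G_n^{\ast}$ is the logarithm of the generalized likelihood ratio for testing $\mathcal{H}_0$: $x_1,\dots,x_n$ are i.i.d. with density $f_0(\cdot\mid\theta_0)$, against $\mathcal{H}_1$: there exist unknown times $\nu \le N$ such that $x_k$ has density $f_1(\cdot\mid\theta_1)$ for $\nu < k \le N$ and density $f_0(\cdot\mid\theta_0)$ otherwise, all observations independent. The likelihood ratio of $\mathcal{H}_1$ with parameters $(\nu,N)$ to $\mathcal{H}_0$ is $\prod_{k=\nu+1}^{N} f_1(x_k\mid\theta_1)/f_0(x_k\mid\theta_0)$, and $G_n^{\ast}$ is the logarithm of its maximum over $(\nu,N)$. *)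

theory Defs
  imports "HOL-Analysis.Analysis"
begin

text \<open>Log-likelihood ratio of observation k (observations indexed from 1).
  The parameters theta0, theta1 are fixed and absorbed into the densities f0, f1.\<close>
definition llr :: "(real \<Rightarrow> real) \<Rightarrow> (real \<Rightarrow> real) \<Rightarrow> (nat \<Rightarrow> real) \<Rightarrow> nat \<Rightarrow> real" where
  "llr f0 f1 x k = ln (f1 (x k) / f0 (x k))"

fun cusum :: "(nat \<Rightarrow> real) \<Rightarrow> nat \<Rightarrow> real" where
  "cusum l 0 = 0"
| "cusum l (Suc n) = max 0 (cusum l n) + l (Suc n)"

fun Grec :: "(nat \<Rightarrow> real) \<Rightarrow> nat \<Rightarrow> real" where
  "Grec l 0 = 0"
| "Grec l (Suc n) = max (Grec l n) (cusum l (Suc n))"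

definition Gstar :: "(nat \<Rightarrow> real) \<Rightarrow> nat \<Rightarrow> real" where
  "Gstar l n = Max {(\<Sum>k\<in>{nu<..N}. l k) | nu N. nu \<le> N \<and> N \<le> n}"

end

theory Submission
  imports Defs
begin

lemma sumS: "nu \<le> n \<Longrightarrow> sum l {nu<..Suc n} = sum l {nu<..n} + (l (Suc n) :: real)"
proof -
  assume "nu \<le> n"
  then have "{nu<..Suc n} = insert (Suc n) {nu<..n}" by auto
  then show ?thesis by simp
qed

lemma cus: "(\<forall>nu\<le>m. sum l {nu<..Suc m} \<le> cusum l (Suc m)) \<and> (\<exists>nu\<le>m. sum l {nu<..Suc m} = cusum l (Suc m))"
proof (induction m)
  case 0
  have "{0<..Suc 0} = {Suc 0}" by auto
  then show ?case by simp
next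
  case (Suc m)
  then obtain nu0 where nu0: "nu0 \<le> m" "sum l {nu0<..Suc m} = cusum l (Suc m)" by blast
  have A: "\<forall>nu\<le>Suc m. sum l {nu<..Suc (Suc m)} \<le> cusum l (Suc (Suc m))"
  proof (intro allI impI)
    fix nu assume h: "nu \<le> Suc m"
    show "sum l {nu<..Suc (Suc m)} \<le> cusum l (Suc (Suc m))"
    proof (cases "nu = Suc m")
      case True then show ?thesis using sumS[of "Suc m" "Suc m" l] by simp
    next
      case False
      then have "nu \<le> m" using h by simp
      then have "sum l {nu<..Suc m} \<le> cusum l (Suc m)" using Suc.IH by blast
      then show ?thesis using sumS[OF h, of l] by simp
    qed
  qed
  have B: "\<exists>nu\<le>Suc m. sum l {nu<..Suc (Suc m)} = cusum l (Suc (Suc m))"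
  proof (cases "cusum l (Suc m) \<ge> 0")
    case True
    then show ?thesis using sumS[of nu0 "Suc m" l] nu0
      by (intro exI[of _ nu0]) auto
  next
    case False
    then show ?thesis using sumS[of "Suc m" "Suc m" l] by (intro exI[of _ "Suc m"]) auto
  qed
  show ?case using A B by blast
qed

lemma grec: "(\<forall>nu N. nu \<le> N \<and> N \<le> n \<longrightarrow> sum l {nu<..N} \<le> Grec l n) \<and>
  (\<exists>nu N. nu \<le> N \<and> N \<le> n \<and> sum l {nu<..N} = Grec l n)"
proof (induction n)
  case 0
  have "\<forall>nu N. nu \<le> N \<and> N \<le> (0::nat) \<longrightarrow> sum l {nu<..N} \<le> Grec l 0" by simp
  moreover have "sum l {0<..0} = Grec l 0" by simp
  ultimately show ?case by blast
next
  case (Suc n)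
  then obtain a b where ab: "a \<le> b" "b \<le> n" "sum l {a<..b} = Grec l n" by blast
  have A: "\<forall>nu N. nu \<le> N \<and> N \<le> Suc n \<longrightarrow> sum l {nu<..N} \<le> Grec l (Suc n)"
  proof (intro allI impI)
    fix nu N assume h: "nu \<le> N \<and> N \<le> Suc n"
    show "sum l {nu<..N} \<le> Grec l (Suc n)"
    proof (cases "N \<le> n")
      case True
      then have "sum l {nu<..N} \<le> Grec l n" using Suc.IH h by blast
      then show ?thesis by simp
    next
      case False
      then have N: "N = Suc n" using h by simp
      show ?thesis
      proof (cases "nu = N")
        case True
        have "sum l {0<..0} \<le> Grec l n" using Suc.IH by blast
        then have "0 \<le> Grec l n" by simp
        then show ?thesis using True by simp
      next
        case False
        then have "nu \<le> n" using h N by simp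
        then have "sum l {nu<..Suc n} \<le> cusum l (Suc n)" using cus[of n l] by blast
        then show ?thesis using N by simp
      qed
    qed
  qed
  have B: "\<exists>nu N. nu \<le> N \<and> N \<le> Suc n \<and> sum l {nu<..N} = Grec l (Suc n)"
  proof (cases "Grec l n \<ge> cusum l (Suc n)")
    case True
    then show ?thesis using ab by (intro exI[of _ a] exI[of _ b]) auto
  next
    case False
    obtain nu where "nu \<le> n" "sum l {nu<..Suc n} = cusum l (Suc n)" using cus[of n l] by blast
    then show ?thesis using False by (intro exI[of _ nu] exI[of _ "Suc n"]) auto
  qed
  show ?case using A B by blast
qed

lemma gstar_eq: "Gstar l n = Grec l n"
proof -
  let ?S = "{(\<Sum>k\<in>{nu<..N}. l k) | nu N. nu \<le> N \<and> N \<le> n}"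
  have "?S \<subseteq> (\<lambda>(nu, N). sum l {nu<..N}) ` ({..n} \<times> {..n})" by auto
  then have fin: "finite ?S" by (rule finite_subset) auto
  have mem: "Grec l n \<in> ?S" using grec[of n l] by (metis (mono_tags, lifting) mem_Collect_eq)
  show ?thesis unfolding Gstar_def
    apply (rule Max_eqI[OF fin])
    using grec[of n l] mem by auto
qed

theorem proposition1:
  fixes x :: "nat \<Rightarrow> real" and f0 f1 :: "real \<Rightarrow> real"
  assumes "\<And>y. f0 y \<ge> 0" and "\<And>y. f1 y \<ge> 0"
    and "f0 integrable_on UNIV" and "integral UNIV f0 = 1"
    and "f1 integrable_on UNIV" and "integral UNIV f1 = 1"
    and "\<And>k. k \<ge> 1 \<Longrightarrow> f0 (x k) > 0"
    and "\<And>k. k \<ge> 1 \<Longrightarrow> f1 (x k) > 0"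
  shows "\<forall>n. Gstar (llr f0 f1 x) n = Grec (llr f0 f1 x) n"
  using gstar_eq by blast

end
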